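(* In the planted $k$-factor model with $p=\lambda/n$, assume $k\lambda\ge 1+\epsilon$ for some constant $\epsilon>0$. Then for every $\delta>0$ and every realization of $H^*$, $$\mathbb P\Big(|\mathcal H_{\rm good}(G)|\le \tfrac{k\lambda}{k\lambda-1}(k\lambda)^{\delta n}\ \Big|\ H^*\Big)\ge 1-(k\lambda)^{-\delta n/2}.$$
   Context: Planted $k$-factor model: fix an integer $k\ge1$ and $n$ with $kn$ even. A $k$-factor on $[n]$ is a $k$-regular simple graph with vertex set $[n]$, identified with its edge set; $\mathcal H$ is the set of all $k$-factors on $[n]$. Let $p=\lambda/n\in[0,1]$. Draw $H^*$ uniformly at random from $\mathcal H$ and, independently, $G_0\sim\mathcal G(n,p)$. The observed graph is $G=G_0\cup H^*$. For $H\in\mathcal H$, $\ell(H,H^* )=|H\triangle H^*|/(kn/2)$. For $\delta>0$, $\mathcal H_{\rm good}(G)=\{H\in\mathcal H:\ \ell(H,H^* )<2\delta/k,\ H\subseteq E(G)\}$. *)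

theory Defs
  imports "HOL-Probability.Probability"
begin

text \<open>Vertex set [n] is rendered as {0..<n}; an (undirected, simple) edge is a
  2-element set of vertices; a graph is identified with its edge set.\<close>

definition all_edges :: "nat \<Rightarrow> nat set set" where
  "all_edges n = {e. \<exists>u v. e = {u, v} \<and> u \<noteq> v \<and> u < n \<and> v < n}"

definition is_k_factor :: "nat \<Rightarrow> nat \<Rightarrow> nat set set \<Rightarrow> bool" where
  "is_k_factor n k H \<longleftrightarrow> H \<subseteq> all_edges n \<and> (\<forall>v<n. card {e\<in>H. v \<in> e} = k)"

definition k_factors :: "nat \<Rightarrow> nat \<Rightarrow> nat set set set" where
  "k_factors n k = {H. is_k_factor n k H}"

definition G_np :: "nat \<Rightarrow> real \<Rightarrow> nat set set pmf" where
  "G_np n p = map_pmf (\<lambda>f. {e \<in> all_edges n. f e})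
                      (Pi_pmf (all_edges n) False (\<lambda>_. bernoulli_pmf p))"

definition loss :: "nat \<Rightarrow> nat \<Rightarrow> nat set set \<Rightarrow> nat set set \<Rightarrow> real" where
  "loss n k H Hs = real (card ((H - Hs) \<union> (Hs - H))) / (real k * real n / 2)"

definition H_good :: "nat \<Rightarrow> nat \<Rightarrow> real \<Rightarrow> nat set set \<Rightarrow> nat set set \<Rightarrow> nat set set set" where
  "H_good n k \<delta> Hs G = {H \<in> k_factors n k. loss n k H Hs < 2 * \<delta> / real k \<and> H \<subseteq> G}"

end

theory Submission
  imports Defs
begin


definition deg :: "nat set set \<Rightarrow> nat \<Rightarrow> nat" where
  "deg A v = card {e\<in>A. v \<in> e}"

lemma all_edges_sub: "all_edges n \<subseteq> Pow {..<n}"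
  by (auto simp: all_edges_def)

lemma finite_all_edges: "finite (all_edges n)"
  by (rule finite_subset[OF all_edges_sub]) auto

lemma all_edges_card: "e \<in> all_edges n \<Longrightarrow> card e = 2"
  by (auto simp: all_edges_def)

lemma all_edges_lt: "e \<in> all_edges n \<Longrightarrow> v \<in> e \<Longrightarrow> v < n"
  by (auto simp: all_edges_def)

lemma handshake:
  assumes "A \<subseteq> all_edges n"
  shows "(\<Sum>v<n. deg A v) = 2 * card A"
proof -
  have fA: "finite A" using assms finite_all_edges by (rule finite_subset)
  have "(\<Sum>v<n. deg A v) = (\<Sum>v<n. \<Sum>e\<in>A. if v \<in> e then 1 else 0)"
    unfolding deg_def using fA by (simp add: sum.If_cases Int_def)
  also have "\<dots> = (\<Sum>e\<in>A. \<Sum>v<n. if v \<in> e then 1 else 0)"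
    by (rule sum.swap)
  also have "\<dots> = (\<Sum>e\<in>A. 2)"
  proof (rule sum.cong[OF refl])
    fix e assume e: "e \<in> A"
    hence "e \<subseteq> {..<n}" "card e = 2" using assms all_edges_lt all_edges_card by blast+
    thus "(\<Sum>v<n. if v \<in> e then 1 else 0) = (2::nat)"
      by (simp add: sum.If_cases Int_absorb1)
  qed
  finally show ?thesis by simp
qed



lemma deg_remove:
  assumes "x \<in> A" "finite A"
  shows "deg (A - {x}) v = deg A v - (if v \<in> x then 1 else 0)"
proof -
  have "{e\<in>A - {x}. v \<in> e} = {e\<in>A. v \<in> e} - {x}" by auto
  thus ?thesis unfolding deg_def using assms by (auto simp: card_Diff_singleton_if)
qed

lemma all_edges_fin: "e \<in> all_edges n \<Longrightarrow> finite e"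
  by (auto simp: all_edges_def)

lemma edge_form:
  assumes "e \<in> all_edges n" "u \<in> e"
  shows "\<exists>w. e = {u, w} \<and> w \<noteq> u \<and> w < n"
  using assms by (auto simp: all_edges_def)

lemma count_graphs:
  "card {A. A \<subseteq> all_edges n \<and> card A = d \<and> (\<forall>v<n. deg A v = g v)} \<le> (\<Prod>i<d. 2*i+1)"
proof (induction d arbitrary: g)
  case 0
  have "{A. A \<subseteq> all_edges n \<and> card A = 0 \<and> (\<forall>v<n. deg A v = g v)} \<subseteq> {{}}"
    using finite_all_edges by (auto simp: card_eq_0_iff dest: finite_subset)
  hence "card {A. A \<subseteq> all_edges n \<and> card A = 0 \<and> (\<forall>v<n. deg A v = g v)} \<le> card {{}::nat set set}"
    by (intro card_mono) auto
  thus ?case by simp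
next
  case (Suc d)
  define S where "S = {A. A \<subseteq> all_edges n \<and> card A = Suc d \<and> (\<forall>v<n. deg A v = g v)}"
  show ?case
  proof (cases "S = {}")
    case True thus ?thesis unfolding S_def by (metis card.empty zero_le)
  next
    case False
    then obtain A0 where A0: "A0 \<in> S" by blast
    have fA0: "finite A0" using A0 unfolding S_def by (auto intro: finite_subset[OF _ finite_all_edges])
    have "A0 \<noteq> {}" using A0 unfolding S_def by auto
    then obtain e0 where e0: "e0 \<in> A0" by blast
    have e0E: "e0 \<in> all_edges n" using A0 e0 unfolding S_def by auto
    then obtain u w0 where uw0: "e0 = {u, w0}" "u \<noteq> w0" "u < n" by (auto simp: all_edges_def)
    have "deg A0 u > 0"
      unfolding deg_def using fA0 e0 uw0 by (auto simp: card_gt_0_iff)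
    hence gu: "g u > 0" using A0 uw0 unfolding S_def by auto
    define nb where "nb A = (LEAST w. {u, w} \<in> A)" for A
    have nbA: "{u, nb A} \<in> A \<and> nb A \<noteq> u \<and> nb A < n" if "A \<in> S" for A
    proof -
      have fA: "finite A" using that unfolding S_def by (auto intro: finite_subset[OF _ finite_all_edges])
      have "deg A u > 0" using that gu uw0 unfolding S_def by auto
      then obtain e where e: "e \<in> A" "u \<in> e" unfolding deg_def
        by (metis (mono_tags, lifting) card.empty empty_Collect_eq less_irrefl)
      have eE: "e \<in> all_edges n" using that e unfolding S_def by auto
      then obtain w where "e = {u, w}" using edge_form e by blast
      hence "\<exists>w. {u, w} \<in> A" using e by blast
      hence i: "{u, nb A} \<in> A" unfolding nb_def by (rule LeastI_ex)
      hence "{u, nb A} \<in> all_edges n" using that unfolding S_def by auto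
      thus ?thesis using i all_edges_card[of "{u, nb A}" n] all_edges_lt[of "{u, nb A}" n "nb A"]
        by (auto simp: card_insert_if)
    qed
    define W where "W = \<Union>A0 - {u}"
    define g' where "g' w v = g v - (if v = u then 1 else 0) - (if v = w then 1 else 0)" for w v
    define S' where "S' w = {A. A \<subseteq> all_edges n \<and> card A = d \<and> (\<forall>v<n. deg A v = g' w v)}" for w
    define \<phi> where "\<phi> A = (nb A, A - {{u, nb A}})" for A
    have inj: "inj_on \<phi> S"
    proof (rule inj_onI)
      fix A B assume AB: "A \<in> S" "B \<in> S" "\<phi> A = \<phi> B"
      have eqs0: "nb A = nb B \<and> A - {{u, nb A}} = B - {{u, nb B}}"
        using AB(3) unfolding \<phi>_def prod.inject by assumption
      note eqs = eqs0[THEN conjunct1] eqs0[THEN conjunct2]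
      have "A = insert {u, nb A} (A - {{u, nb A}})" using nbA[OF AB(1)] by blast
      also have "\<dots> = insert {u, nb B} (B - {{u, nb B}})" using eqs by simp
      also have "\<dots> = B" using nbA[OF AB(2)] by blast
      finally show "A = B" .
    qed
    have img: "\<phi> ` S \<subseteq> Sigma W S'"
    proof
      fix y assume "y \<in> \<phi> ` S"
      then obtain A where A: "A \<in> S" "y = \<phi> A" by blast
      have fA: "finite A" using A(1) unfolding S_def by (auto intro: finite_subset[OF _ finite_all_edges])
      note nb = nbA[OF A(1)]
      have "deg A (nb A) > 0" unfolding deg_def using fA nb by (auto simp: card_gt_0_iff)
      hence "deg A0 (nb A) > 0" using A A0 nb unfolding S_def by auto
      then obtain e where "e \<in> A0" "nb A \<in> e" unfolding deg_def
        by (metis (mono_tags, lifting) card.empty empty_Collect_eq less_irrefl)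
      hence w: "nb A \<in> W" unfolding W_def using nb by auto
      have "A - {{u, nb A}} \<in> S' (nb A)"
        unfolding S'_def
      proof (intro CollectI conjI allI impI)
        show "A - {{u, nb A}} \<subseteq> all_edges n" using A unfolding S_def by auto
        show "card (A - {{u, nb A}}) = d" using A nb unfolding S_def by auto
        fix v assume "v < n"
        thus "deg (A - {{u, nb A}}) v = g' (nb A) v"
          using deg_remove[OF nb[THEN conjunct1] fA, of v] A nb unfolding S_def g'_def by auto
      qed
      thus "y \<in> Sigma W S'" using A w unfolding \<phi>_def by auto
    qed
    have A0E: "A0 \<subseteq> all_edges n" using A0 unfolding S_def by blast
    have "\<forall>e\<in>A0. finite e" using A0E all_edges_fin by blast
    hence fW: "finite W" unfolding W_def using fA0 by (intro finite_Diff finite_Union) auto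
    have fS': "finite (S' w)" for w
    proof -
      have "S' w \<subseteq> Pow (all_edges n)" unfolding S'_def by blast
      thus ?thesis using finite_all_edges by (rule finite_subset[OF _ finite_Pow_iff[THEN iffD2]])
    qed
    have "card (\<Union>A0) \<le> (\<Sum>e\<in>A0. card e)" by (rule card_Union_le_sum_card)
    also have "\<dots> = (\<Sum>e\<in>A0. 2)" using A0 all_edges_card unfolding S_def
      by (intro sum.cong) auto
    also have "\<dots> = 2 * Suc d" using A0 unfolding S_def by simp
    finally have cU: "card (\<Union>A0) \<le> 2 * Suc d" .
    have "u \<in> \<Union>A0" using e0 uw0 by auto
    hence cW: "card W \<le> 2*d+1" using cU fW unfolding W_def by (simp add: card_Diff_singleton_if)
    have "card S = card (\<phi> ` S)" using inj by (simp add: card_image)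
    also have "\<dots> \<le> card (Sigma W S')" using img fW fS' by (intro card_mono) auto
    also have "\<dots> = (\<Sum>w\<in>W. card (S' w))" using fW fS' by (simp add: card_SigmaI)
    also have "\<dots> \<le> (\<Sum>w\<in>W. \<Prod>i<d. 2*i+1)" unfolding S'_def by (intro sum_mono Suc.IH)
    also have "\<dots> = card W * (\<Prod>i<d. 2*i+1)" by simp
    also have "\<dots> \<le> (2*d+1) * (\<Prod>i<d. 2*i+1)" using cW by (rule mult_le_mono1)
    also have "\<dots> = (\<Prod>i<Suc d. 2*i+1)" by simp
    finally show ?thesis unfolding S_def .
  qed
qed



lemma kf_sub: "H \<in> k_factors n k \<Longrightarrow> H \<subseteq> all_edges n"
  by (simp add: k_factors_def is_k_factor_def)

lemma kf_deg: "H \<in> k_factors n k \<Longrightarrow> v < n \<Longrightarrow> deg H v = k"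
  by (simp add: k_factors_def is_k_factor_def deg_def)

lemma kf_finite: "H \<in> k_factors n k \<Longrightarrow> finite H"
  by (rule finite_subset[OF kf_sub finite_all_edges])

lemma finite_kf: "finite (k_factors n k)"
proof -
  have "k_factors n k \<subseteq> Pow (all_edges n)" using kf_sub by blast
  thus ?thesis by (rule finite_subset) (simp add: finite_all_edges)
qed

lemma kf_card: "H \<in> k_factors n k \<Longrightarrow> 2 * card H = k * n"
  using handshake[OF kf_sub, of H n k] kf_deg[of H n k] by (simp add: mult.commute)

lemma deg_split: "finite H \<Longrightarrow> deg H v = deg (H \<inter> K) v + deg (H - K) v"
  unfolding deg_def
proof -
  assume f: "finite H"
  have "{e\<in>H. v \<in> e} = {e\<in>H \<inter> K. v \<in> e} \<union> {e\<in>H - K. v \<in> e}" by auto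
  moreover have "card ({e\<in>H \<inter> K. v \<in> e} \<union> {e\<in>H - K. v \<in> e}) =
      card {e\<in>H \<inter> K. v \<in> e} + card {e\<in>H - K. v \<in> e}"
    using f by (intro card_Un_disjoint) auto
  ultimately show "card {e\<in>H. v \<in> e} = card {e\<in>H \<inter> K. v \<in> e} + card {e\<in>H - K. v \<in> e}" by simp
qed

lemma diff_card_eq:
  assumes "H \<in> k_factors n k" "Hs \<in> k_factors n k"
  shows "card (Hs - H) = card (H - Hs)"
proof -
  have f: "finite H" "finite Hs" using assms kf_finite by auto
  have "card H = card Hs" using kf_card[OF assms(1)] kf_card[OF assms(2)] by simp
  moreover have "card H = card (H \<inter> Hs) + card (H - Hs)"
    using f by (metis card_Int_Diff)
  moreover have "card Hs = card (H \<inter> Hs) + card (Hs - H)"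
    using f by (metis card_Int_Diff Int_commute)
  ultimately show ?thesis by simp
qed

lemma prod_odd_le: "(\<Prod>i<d. 2*i+1::nat) \<le> 2^d * fact d"
proof (induction d)
  case 0 thus ?case by simp
next
  case (Suc d)
  have "(\<Prod>i<Suc d. 2*i+1::nat) = (2*d+1) * (\<Prod>i<d. 2*i+1)" by simp
  also have "\<dots> \<le> (2*d+2) * (2^d * fact d)" using Suc by (intro mult_mono) auto
  also have "\<dots> = 2^Suc d * fact (Suc d)" by (simp add: algebra_simps)
  finally show ?case .
qed

lemma binom_fact_le: "fact d * (m choose d) \<le> (m::nat)^d"
proof (cases "d \<le> m")
  case True
  have "fact d * (m choose d) * fact (m - d) = fact m"
    using binomial_fact_lemma[OF True] by (simp add: algebra_simps)
  hence "fact d * (m choose d) = fact m div fact (m - d)" by (metis fact_nonzero nonzero_mult_div_cancel_right)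
  thus ?thesis using fact_div_fact_le_pow[OF True] by simp
next
  case False thus ?thesis by (simp add: binomial_eq_0)
qed

lemma count_kf:
  assumes Hs: "Hs \<in> k_factors n k"
  shows "card {H \<in> k_factors n k. card (H - Hs) = d} \<le> (k*n)^d"
proof -
  define T where "T = {H \<in> k_factors n k. card (H - Hs) = d}"
  define Rs where "Rs = {R. R \<subseteq> Hs \<and> card R = d}"
  define As where "As R = {A. A \<subseteq> all_edges n \<and> card A = d \<and> (\<forall>v<n. deg A v = deg R v)}" for R
  define \<psi> where "\<psi> H = (Hs - H, H - Hs)" for H
  have fHs: "finite Hs" using Hs kf_finite by blast
  have inj: "inj_on \<psi> T" unfolding \<psi>_def by (rule inj_onI) (auto simp: T_def)
  have img: "\<psi> ` T \<subseteq> Sigma Rs As"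
  proof
    fix y assume "y \<in> \<psi> ` T"
    then obtain H where H: "H \<in> T" "y = \<psi> H" by blast
    have Hk: "H \<in> k_factors n k" and cd: "card (H - Hs) = d" using H unfolding T_def by auto
    have fH: "finite H" using Hk kf_finite by blast
    have "Hs - H \<in> Rs" unfolding Rs_def using diff_card_eq[OF Hk Hs] cd by auto
    moreover have "H - Hs \<in> As (Hs - H)" unfolding As_def
    proof (intro CollectI conjI allI impI)
      show "H - Hs \<subseteq> all_edges n" using kf_sub[OF Hk] by auto
      show "card (H - Hs) = d" by (rule cd)
      fix v assume v: "v < n"
      have "deg H v = deg (H \<inter> Hs) v + deg (H - Hs) v" using deg_split[OF fH] .
      moreover have "deg Hs v = deg (Hs \<inter> H) v + deg (Hs - H) v" using deg_split[OF fHs] .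
      moreover have "deg H v = k" "deg Hs v = k" using kf_deg[OF Hk v] kf_deg[OF Hs v] by auto
      ultimately show "deg (H - Hs) v = deg (Hs - H) v" by (simp add: Int_commute)
    qed
    ultimately show "y \<in> Sigma Rs As" using H unfolding \<psi>_def by auto
  qed
  have "Rs \<subseteq> Pow Hs" unfolding Rs_def by blast
  hence fRs: "finite Rs" using fHs by (rule finite_subset[OF _ finite_Pow_iff[THEN iffD2]])
  have fAs: "finite (As R)" for R
  proof -
    have "As R \<subseteq> Pow (all_edges n)" unfolding As_def by blast
    thus ?thesis using finite_all_edges by (rule finite_subset[OF _ finite_Pow_iff[THEN iffD2]])
  qed
  have "card T = card (\<psi> ` T)" using inj by (simp add: card_image)
  also have "\<dots> \<le> card (Sigma Rs As)" using img fRs fAs by (intro card_mono) auto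
  also have "\<dots> = (\<Sum>R\<in>Rs. card (As R))" using fRs fAs by (simp add: card_SigmaI)
  also have "\<dots> \<le> (\<Sum>R\<in>Rs. \<Prod>i<d. 2*i+1)" unfolding As_def by (intro sum_mono count_graphs)
  also have "\<dots> = (card Hs choose d) * (\<Prod>i<d. 2*i+1)"
    unfolding Rs_def using n_subsets[OF fHs, of d] by simp
  also have "\<dots> \<le> (card Hs choose d) * (2^d * fact d)" by (intro mult_le_mono2 prod_odd_le)
  also have "\<dots> = 2^d * (fact d * (card Hs choose d))" by (simp add: algebra_simps)
  also have "\<dots> \<le> 2^d * (card Hs)^d" by (intro mult_le_mono2 binom_fact_le)
  also have "\<dots> = (2 * card Hs)^d" by (simp add: power_mult_distrib)
  also have "\<dots> = (k*n)^d" using kf_card[OF Hs] by simp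
  finally show ?thesis unfolding T_def .
qed



lemma prob_subset:
  assumes S: "S \<subseteq> all_edges n" and p: "0 \<le> p" "p \<le> 1"
  shows "measure_pmf.prob (G_np n p) {G. S \<subseteq> G} = p ^ card S"
proof -
  let ?E = "all_edges n"
  let ?B = "\<lambda>e. if e \<in> S then {True} else (UNIV::bool set)"
  have pre: "(\<lambda>f. {e\<in>?E. f e}) -` {G. S \<subseteq> G} = Pi ?E ?B"
    using S by (auto simp: Pi_def)
  have "measure_pmf.prob (G_np n p) {G. S \<subseteq> G} =
      measure_pmf.prob (Pi_pmf ?E False (\<lambda>_. bernoulli_pmf p)) (Pi ?E ?B)"
    unfolding G_np_def measure_map_pmf pre ..
  also have "\<dots> = (\<Prod>e\<in>?E. measure_pmf.prob (bernoulli_pmf p) (?B e))"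
    by (rule measure_Pi_pmf_Pi[OF finite_all_edges])
  also have "\<dots> = (\<Prod>e\<in>?E. if e \<in> S then p else 1)"
    using p by (intro prod.cong) (auto simp: measure_pmf_single)
  also have "\<dots> = p ^ card S"
    using S finite_all_edges by (simp add: prod.If_cases Int_absorb1)
  finally show ?thesis .
qed

lemma card_as_sum:
  assumes D: "finite D"
  shows "(\<lambda>G. real (card {H\<in>D. H - Hs \<subseteq> G})) =
      (\<lambda>G. \<Sum>H\<in>D. indicator {G. H - Hs \<subseteq> G} G)"
proof
  fix G
  have "(\<Sum>H\<in>D. indicator {G. H - Hs \<subseteq> G} G :: real) = (\<Sum>H\<in>D. indicator {H. H - Hs \<subseteq> G} H)"
    by (intro sum.cong) (auto simp: indicator_def)
  also have "\<dots> = real (card (D \<inter> {H. H - Hs \<subseteq> G}))" using D by (simp add: indicator_def sum.If_cases)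
  also have "D \<inter> {H. H - Hs \<subseteq> G} = {H\<in>D. H - Hs \<subseteq> G}" by auto
  finally show "real (card {H\<in>D. H - Hs \<subseteq> G}) = (\<Sum>H\<in>D. indicator {G. H - Hs \<subseteq> G} G)" by simp
qed

lemma integrable_X:
  assumes D: "finite D"
  shows "integrable (measure_pmf M) (\<lambda>G. real (card {H\<in>D. H - Hs \<subseteq> G}))"
  unfolding card_as_sum[OF D]
  by (intro Bochner_Integration.integrable_sum integrable_real_indicator) (simp_all add: measure_pmf.emeasure_finite less_top[symmetric])

lemma expect_eq:
  assumes D: "finite D" and sub: "\<And>H. H \<in> D \<Longrightarrow> H - Hs \<subseteq> all_edges n"
    and p: "0 \<le> p" "p \<le> 1"
  shows "measure_pmf.expectation (G_np n p) (\<lambda>G. real (card {H\<in>D. H - Hs \<subseteq> G}))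
       = (\<Sum>H\<in>D. p ^ card (H - Hs))"
proof -
  have eq: "(\<lambda>G. real (card {H\<in>D. H - Hs \<subseteq> G})) =
      (\<lambda>G. \<Sum>H\<in>D. indicator {G. H - Hs \<subseteq> G} G)"
  proof
    fix G
    have "(\<Sum>H\<in>D. indicator {G. H - Hs \<subseteq> G} G :: real) = (\<Sum>H\<in>D. indicator {H. H - Hs \<subseteq> G} H)"
      by (intro sum.cong) (auto simp: indicator_def)
    also have "\<dots> = real (card (D \<inter> {H. H - Hs \<subseteq> G}))" using D by (simp add: indicator_def sum.If_cases)
    also have "D \<inter> {H. H - Hs \<subseteq> G} = {H\<in>D. H - Hs \<subseteq> G}" by auto
    finally show "real (card {H\<in>D. H - Hs \<subseteq> G}) = (\<Sum>H\<in>D. indicator {G. H - Hs \<subseteq> G} G)" by simp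
  qed
  have int: "integrable (measure_pmf (G_np n p)) (indicator {G. H - Hs \<subseteq> G} :: _ \<Rightarrow> real)" for H
    by (intro integrable_real_indicator) (simp_all add: measure_pmf.emeasure_finite less_top[symmetric])
  have "measure_pmf.expectation (G_np n p) (\<lambda>G. \<Sum>H\<in>D. indicator {G. H - Hs \<subseteq> G} G :: real) =
      (\<Sum>H\<in>D. measure_pmf.expectation (G_np n p) (indicator {G. H - Hs \<subseteq> G} :: _ \<Rightarrow> real))"
    by (rule Bochner_Integration.integral_sum[where f="\<lambda>H. indicator {G. H - Hs \<subseteq> G}"]) (use int in auto)
  also have "\<dots> = (\<Sum>H\<in>D. p ^ card (H - Hs))"
    by (intro sum.cong refl) (simp add: prob_subset[OF sub p])
  finally show ?thesis unfolding eq .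
qed



lemma card_symdiff:
  assumes "H \<in> k_factors n k" "Hs \<in> k_factors n k"
  shows "card ((H - Hs) \<union> (Hs - H)) = 2 * card (H - Hs)"
proof -
  have f: "finite H" "finite Hs" using assms kf_finite by auto
  have "card ((H - Hs) \<union> (Hs - H)) = card (H - Hs) + card (Hs - H)"
    using f by (intro card_Un_disjoint) auto
  thus ?thesis using diff_card_eq[OF assms] by simp
qed

lemma nat_ceiling_bound:
  fixes x :: real and c :: nat
  assumes "real c < x"
  shows "c < nat \<lceil>x\<rceil>"
proof -
  have "real c < real_of_int \<lceil>x\<rceil>" using assms le_of_int_ceiling[of x] by linarith
  hence "int c < \<lceil>x\<rceil>" by linarith
  thus ?thesis by linarith
qed

lemma geom_bound:
  fixes r x :: real
  assumes r: "r > 1" and x: "x \<ge> 0"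
  shows "(\<Sum>d<nat \<lceil>x\<rceil>. r ^ d) \<le> r / (r - 1) * r powr x"
proof -
  define K where "K = nat \<lceil>x\<rceil>"
  have "(\<Sum>d<K. r ^ d) = (r ^ K - 1) / (r - 1)" using r by (simp add: geometric_sum)
  also have "\<dots> \<le> r ^ K / (r - 1)" using r by (intro divide_right_mono) auto
  also have "r ^ K = r powr (real K)" using r by (simp add: powr_realpow)
  also have "r powr (real K) \<le> r powr (x + 1)"
  proof (rule powr_mono)
    show "real K \<le> x + 1" unfolding K_def using x by linarith
  qed (use r in auto)
  also have "r powr (x + 1) = r * r powr x" using r by (simp add: powr_add)
  finally have "(\<Sum>d<K. r ^ d) \<le> r * r powr x / (r - 1)" using r by (simp add: divide_right_mono)
  thus ?thesis unfolding K_def by simp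
qed

theorem mainTheorem8:
  fixes k n :: nat and lam \<epsilon> \<delta> :: real and Hs :: "nat set set"
  assumes "k \<ge> 1"
    and "even (k * n)"
    and "0 \<le> lam / real n" and "lam / real n \<le> 1"
    and "\<epsilon> > 0"
    and "real k * lam \<ge> 1 + \<epsilon>"
    and "\<delta> > 0"
    and "Hs \<in> k_factors n k"
  shows "measure_pmf.prob (G_np n (lam / real n))
           {G0. real (card (H_good n k \<delta> Hs (G0 \<union> Hs)))
                  \<le> (real k * lam) / (real k * lam - 1) * (real k * lam) powr (\<delta> * real n)}
         \<ge> 1 - (real k * lam) powr (- \<delta> * real n / 2)"
proof -
  define r where "r = real k * lam"
  define p where "p = lam / real n"
  define B where "B = r / (r - 1) * r powr (\<delta> * real n)"
  have r1: "r > 1" using assms(5,6) unfolding r_def by linarith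
  have Bpos: "B > 0" using r1 unfolding B_def by simp
  have Hs: "Hs \<in> k_factors n k" by fact
  let ?M = "measure_pmf (G_np n p)"
  show ?thesis
  proof (cases "n = 0")
    case True
    have "k_factors n k \<subseteq> {{}}" using True kf_sub by (fastforce simp: all_edges_def)
    hence "card (k_factors n k) \<le> card {{}::nat set set}" by (intro card_mono) auto
    hence "card (k_factors n k) \<le> 1" by simp
    hence c: "card (H_good n k \<delta> Hs G) \<le> 1" for G
      using card_mono[OF finite_kf, of "H_good n k \<delta> Hs G" n k] unfolding H_good_def by auto
    have "1 \<le> B" unfolding B_def using True r1 by (simp add: field_simps)
    hence "{G0. real (card (H_good n k \<delta> Hs (G0 \<union> Hs))) \<le> B} = UNIV"
      using c by (auto intro: order_trans[OF _ \<open>1 \<le> B\<close>])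
    moreover have "0 \<le> r powr (- \<delta> * real n / 2)" by simp
    ultimately show ?thesis unfolding B_def r_def by simp
  next
    case False
    hence npos: "n > 0" by simp
    have kpos: "k > 0" using assms(1) by simp
    define D where "D = {H \<in> k_factors n k. real (2 * card (H - Hs)) < \<delta> * real n}"
    define X where "X G = real (card {H\<in>D. H - Hs \<subseteq> G})" for G
    have fD: "finite D" unfolding D_def using finite_kf by simp
    have Hgood: "H_good n k \<delta> Hs (G \<union> Hs) = {H\<in>D. H - Hs \<subseteq> G}" for G
    proof -
      have "loss n k H Hs < 2 * \<delta> / real k \<longleftrightarrow> real (2 * card (H - Hs)) < \<delta> * real n"
        if "H \<in> k_factors n k" for H
      proof -
        have "loss n k H Hs = real (2 * card (H - Hs)) / (real k * real n / 2)"
          unfolding loss_def card_symdiff[OF that Hs] ..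
        also have "\<dots> = 4 * real (card (H - Hs)) / (real k * real n)" by (simp add: field_simps)
        finally have L: "loss n k H Hs = 4 * real (card (H - Hs)) / (real k * real n)" .
        have kn: "real k * real n > 0" using npos kpos by simp
        have "4 * real (card (H - Hs)) / (real k * real n) < 2 * \<delta> / real k \<longleftrightarrow>
              4 * real (card (H - Hs)) < 2 * \<delta> / real k * (real k * real n)"
          using kn by (rule pos_divide_less_eq)
        also have "2 * \<delta> / real k * (real k * real n) = 2 * (\<delta> * real n)" using kpos by simp
        finally show ?thesis unfolding L by simp
      qed
      thus ?thesis unfolding H_good_def D_def by blast
    qed
    have ev: "{G0. real (card (H_good n k \<delta> Hs (G0 \<union> Hs))) \<le> B} = UNIV - {G. B \<le> X G} \<union> {G. X G = B}"
      unfolding Hgood X_def by auto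
    have p01: "0 \<le> p" "p \<le> 1" using assms(3,4) unfolding p_def by auto
    have EX: "measure_pmf.expectation (G_np n p) X = (\<Sum>H\<in>D. p ^ card (H - Hs))"
      unfolding X_def using fD p01 kf_sub unfolding D_def by (intro expect_eq) auto
    define K where "K = nat \<lceil>\<delta> * real n / 2\<rceil>"
    have cK: "card (H - Hs) < K" if "H \<in> D" for H
      unfolding K_def using that unfolding D_def by (intro nat_ceiling_bound) auto
    have "(\<Sum>H\<in>D. p ^ card (H - Hs)) = (\<Sum>H\<in>D. \<Sum>d<K. if card (H - Hs) = d then p ^ d else 0)"
      using cK by (intro sum.cong refl) auto
    also have "\<dots> = (\<Sum>d<K. \<Sum>H\<in>D. if card (H - Hs) = d then p ^ d else 0)"
      by (rule sum.swap)
    also have "\<dots> = (\<Sum>d<K. real (card {H\<in>D. card (H - Hs) = d}) * p ^ d)"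
    proof (intro sum.cong refl)
      fix d
      have "(\<Sum>H\<in>D. if card (H - Hs) = d then p ^ d else 0) = (\<Sum>H\<in>{H\<in>D. card (H - Hs) = d}. p ^ d)"
        using fD by (simp add: sum.If_cases Int_def)
      thus "(\<Sum>H\<in>D. if card (H - Hs) = d then p ^ d else 0) = real (card {H\<in>D. card (H - Hs) = d}) * p ^ d"
        by simp
    qed
    also have "\<dots> \<le> (\<Sum>d<K. r ^ d)"
    proof (intro sum_mono)
      fix d
      have "card {H\<in>D. card (H - Hs) = d} \<le> card {H \<in> k_factors n k. card (H - Hs) = d}"
        using finite_kf by (intro card_mono) (auto simp: D_def)
      also have "\<dots> \<le> (k*n)^d" by (rule count_kf[OF Hs])
      finally have "real (card {H\<in>D. card (H - Hs) = d}) \<le> real (k*n) ^ d"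
        by (metis of_nat_le_iff of_nat_power)
      hence "real (card {H\<in>D. card (H - Hs) = d}) * p ^ d \<le> real (k*n) ^ d * p ^ d"
        using p01 by (intro mult_right_mono) auto
      also have "\<dots> = r ^ d" unfolding r_def p_def using npos
        by (simp add: power_mult_distrib[symmetric])
      finally show "real (card {H\<in>D. card (H - Hs) = d}) * p ^ d \<le> r ^ d" .
    qed
    also have "\<dots> \<le> r / (r - 1) * r powr (\<delta> * real n / 2)"
      unfolding K_def using r1 assms(7) by (intro geom_bound) auto
    finally have EXb: "measure_pmf.expectation (G_np n p) X \<le> r / (r - 1) * r powr (\<delta> * real n / 2)"
      unfolding EX .
    have intX: "integrable ?M X" unfolding X_def by (rule integrable_X[OF fD])
    have "measure ?M {G\<in>space ?M. X G \<ge> B} \<le> measure_pmf.expectation (G_np n p) X / B"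
      using intX Bpos by (intro integral_Markov_inequality_measure) (auto simp: X_def[abs_def])
    also have "\<dots> \<le> (r / (r - 1) * r powr (\<delta> * real n / 2)) / B"
      using EXb Bpos by (intro divide_right_mono) auto
    also have "\<dots> = r powr (\<delta> * real n / 2) / r powr (\<delta> * real n)"
      unfolding B_def using r1 by (simp add: field_simps)
    also have "\<dots> = r powr (- \<delta> * real n / 2)"
      using r1 by (simp add: powr_diff[symmetric])
    finally have mk: "measure ?M {G. X G \<ge> B} \<le> r powr (- \<delta> * real n / 2)" by simp
    have "measure ?M {G0. real (card (H_good n k \<delta> Hs (G0 \<union> Hs))) \<le> B} \<ge> measure ?M (UNIV - {G. B \<le> X G})"
      unfolding Hgood X_def by (intro measure_pmf.finite_measure_mono) auto
    moreover have "measure ?M (UNIV - {G. B \<le> X G}) = 1 - measure ?M {G. B \<le> X G}"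
      using measure_pmf.prob_compl[of "{G. B \<le> X G}" "G_np n p"] by simp
    ultimately show ?thesis using mk unfolding B_def r_def p_def by simp
  qed
qed


end
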